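(* Let $G$ be a graph and let $(P,z)$ be a near-obstruction in $G$. Then the subgraph of $G$ induced by $V(P)\cup\{z\}$ contains an induced subgraph that is a Meyniel obstruction.
   Context: A path $v_0$-$v_1$-$\cdots$-$v_p$ consists of distinct vertices with $v_jv_{j+1}$ edges for all $j$; a chord is an edge of $G$ between two non-consecutive vertices of the path. A near-obstruction in $G$ is a pair $(P,z)$ where $P=v_0$-$\cdots$-$v_p$ is a path in $G$ with $p\ge 3$ odd, $P$ has at most one chord and such a chord (if any) is $v_{t-1}v_{t+1}$ with $0<t<p-1$, $z$ is a vertex of $G$ not on $P$ adjacent to both $v_0$ and $v_p$, and one of the following holds: (Type 1) $v_0v_2$ is the only chord of $P$ and $z$ is adjacent to neither $v_1$ nor $v_2$; (Type 2) $v_1v_3$ is the only chord of $P$ and $z$ is non-adjacent to at least one of $v_1,v_3$; (Type 3) $v_0v_2$ is not a chord of $P$ and $z$ is not adjacent to $v_1$; (Type 4) neither $v_0v_2$ nor $v_1v_3$ is a chord of $P$, and $z$ is adjacent to $v_1$ and not to $v_2$. A Meyniel obstruction is an odd cycle with at least five vertices and at most one chord. *)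

theory Defs
  imports Main
begin

definition graph :: "'a set \<Rightarrow> ('a \<Rightarrow> 'a \<Rightarrow> bool) \<Rightarrow> bool" where
  "graph V E \<longleftrightarrow> (\<forall>x y. E x y \<longrightarrow> x \<in> V \<and> y \<in> V) \<and> (\<forall>x y. E x y \<longrightarrow> E y x) \<and> (\<forall>x. \<not> E x x)"

definition is_path :: "'a set \<Rightarrow> ('a \<Rightarrow> 'a \<Rightarrow> bool) \<Rightarrow> 'a list \<Rightarrow> bool" where
  "is_path V E P \<longleftrightarrow> P \<noteq> [] \<and> distinct P \<and> set P \<subseteq> V \<and>
     (\<forall>j. j + 1 < length P \<longrightarrow> E (P ! j) (P ! (j + 1)))"

definition path_chords :: "('a \<Rightarrow> 'a \<Rightarrow> bool) \<Rightarrow> 'a list \<Rightarrow> (nat \<times> nat) set" where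
  "path_chords E P = {(i, j). i + 2 \<le> j \<and> j < length P \<and> E (P ! i) (P ! j)}"

definition near_obstruction :: "'a set \<Rightarrow> ('a \<Rightarrow> 'a \<Rightarrow> bool) \<Rightarrow> 'a list \<Rightarrow> 'a \<Rightarrow> bool" where
  "near_obstruction V E P z \<longleftrightarrow>
     (let p = length P - 1; ch = path_chords E P in
      is_path V E P \<and> p \<ge> 3 \<and> odd p \<and>
      card ch \<le> 1 \<and>
      (\<forall>(i, j) \<in> ch. j = i + 2 \<and> 0 < i + 1 \<and> i + 1 < p - 1) \<and>
      z \<in> V \<and> z \<notin> set P \<and> E z (P ! 0) \<and> E z (P ! p) \<and>
      ( (ch = {(0, 2)} \<and> \<not> E z (P ! 1) \<and> \<not> E z (P ! 2))
      \<or> (ch = {(1, 3)} \<and> (\<not> E z (P ! 1) \<or> \<not> E z (P ! 3)))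
      \<or> ((0, 2) \<notin> ch \<and> \<not> E z (P ! 1))
      \<or> ((0, 2) \<notin> ch \<and> (1, 3) \<notin> ch \<and> E z (P ! 1) \<and> \<not> E z (P ! 2))))"

definition is_cycle :: "'a set \<Rightarrow> ('a \<Rightarrow> 'a \<Rightarrow> bool) \<Rightarrow> 'a list \<Rightarrow> bool" where
  "is_cycle V E C \<longleftrightarrow> length C \<ge> 3 \<and> distinct C \<and> set C \<subseteq> V \<and>
     (\<forall>i < length C. E (C ! i) (C ! ((i + 1) mod length C)))"

definition cycle_chords :: "('a \<Rightarrow> 'a \<Rightarrow> bool) \<Rightarrow> 'a list \<Rightarrow> (nat \<times> nat) set" where
  "cycle_chords E C = {(i, j). i + 1 < j \<and> j < length C \<and> \<not> (i = 0 \<and> j = length C - 1)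
                              \<and> E (C ! i) (C ! j)}"

text \<open>The subgraph induced by the vertex set of C is a Meyniel obstruction:
  an odd cycle on at least five vertices with at most one chord.\<close>
definition meyniel_obstruction :: "'a set \<Rightarrow> ('a \<Rightarrow> 'a \<Rightarrow> bool) \<Rightarrow> 'a list \<Rightarrow> bool" where
  "meyniel_obstruction V E C \<longleftrightarrow> is_cycle V E C \<and> odd (length C) \<and> length C \<ge> 5 \<and>
     card (cycle_chords E C) \<le> 1"

end

theory Submission
  imports Defs
begin

lemma comb:
  fixes S :: "nat set"
  shows "a < b \<Longrightarrow> a \<in> S \<Longrightarrow> b \<in> S \<Longrightarrow> odd (b - a) \<Longrightarrow> (\<exists>w. a<w \<and> w<b \<and> w \<notin> S) \<Longrightarrow>
    \<exists>x y. a \<le> x \<and> x < y \<and> y \<le> b \<and> x \<in> S \<and> y \<in> S \<and> odd (y - x) \<and> 3 \<le> y - x \<and>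
      (\<forall>w w'. x<w \<longrightarrow> w<y \<longrightarrow> x<w' \<longrightarrow> w'<y \<longrightarrow> w\<in>S \<longrightarrow> w'\<in>S \<longrightarrow> w=w')"
proof (induction "b - a" arbitrary: a rule: less_induct)
  case less
  define w0 where "w0 = (LEAST w. a<w \<and> w<b \<and> w\<notin>S)"
  have w0: "a<w0" "w0<b" "w0\<notin>S"
    using LeastI_ex[OF less.prems(5)] unfolding w0_def by auto
  have w0min: "w \<in> S" if "a<w" "w<w0" for w
    using not_less_Least[of w "\<lambda>w. a<w \<and> w<b \<and> w\<notin>S"] that w0 unfolding w0_def by auto
  have exc: "\<exists>c. w0<c \<and> c\<in>S" using w0 less.prems by auto
  define c where "c = (LEAST c. w0<c \<and> c\<in>S)"
  have c: "w0<c" "c\<in>S" using LeastI_ex[OF exc] unfolding c_def by auto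
  have cb: "c \<le> b" using Least_le[of "\<lambda>c. w0<c \<and> c\<in>S" b] w0 less.prems unfolding c_def by auto
  have cmin: "v \<notin> S" if "w0<v" "v<c" for v
    using not_less_Least[of v "\<lambda>c. w0<c \<and> c\<in>S"] that unfolding c_def by auto
  have w1: "w0 - 1 \<in> S"
  proof (cases "w0 - 1 = a")
    case True then show ?thesis using less.prems by simp
  next
    case False then show ?thesis using w0min[of "w0-1"] w0 by auto
  qed
  show ?case
  proof (cases "odd (c - (w0 - 1))")
    case True
    have g2: "c - (w0-1) \<ge> 2" using c w0 by arith
    have g3: "3 \<le> c - (w0-1)" using g2 True by presburger
    have ni: "\<forall>w. w0-1<w \<longrightarrow> w<c \<longrightarrow> w\<notin>S"
    proof (intro allI impI)
      fix w assume "w0-1<w" "w<c"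
      then show "w\<notin>S" using cmin[of w] w0 by (cases "w = w0") auto
    qed
    show ?thesis
      apply (rule exI[of _ "w0-1"], rule exI[of _ c])
      using True w0 c cb w1 ni g3 by auto
  next
    case False
    note ev = False
    show ?thesis
    proof (cases "w0 - 1 > a")
      case True
      have w2: "w0 - 2 \<in> S"
      proof (cases "w0 - 2 = a")
        case True then show ?thesis using less.prems by simp
      next
        case False then show ?thesis using w0min[of "w0-2"] w0 \<open>w0 - 1 > a\<close> by auto
      qed
      have "\<forall>w. w0-2<w \<longrightarrow> w<c \<longrightarrow> w\<in>S \<longrightarrow> w = w0-1"
      proof (intro allI impI)
        fix w assume "w0-2<w" "w<c" "w\<in>S"
        have "\<not> w0 < w" using cmin[of w] \<open>w<c\<close> \<open>w\<in>S\<close> by blast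
        moreover have "w \<noteq> w0" using w0 \<open>w\<in>S\<close> by blast
        ultimately show "w = w0 - 1" using \<open>w0-2<w\<close> by arith
      qed
      note uni = this
      have "odd (c - (w0-2))" "3 \<le> c - (w0-2)" using ev True w0 c by presburger+
      moreover have "\<forall>w w'. w0-2<w \<longrightarrow> w<c \<longrightarrow> w0-2<w' \<longrightarrow> w'<c \<longrightarrow> w\<in>S \<longrightarrow> w'\<in>S \<longrightarrow> w=w'"
        using uni by metis
      moreover have "a \<le> w0-2" "w0-2 < c" using w0 c \<open>w0 - 1 > a\<close> by auto
      ultimately show ?thesis using cb w2 c by blast
    next
      case False
      then have wa: "w0 = a+1" using w0 by auto
      have cb': "c < b" using ev wa less.prems(4) cb by (cases "c = b") auto
      show ?thesis
      proof (cases "\<exists>w. c<w \<and> w<b \<and> w \<notin> S")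
        case True
        have "odd (b - c)" using ev wa less.prems(4) cb' c by presburger
        have lt: "b - c < b - a" using wa c(1) cb' by arith
        have "\<exists>x y. c \<le> x \<and> x < y \<and> y \<le> b \<and> x \<in> S \<and> y \<in> S \<and> odd (y - x) \<and> 3 \<le> y - x \<and>
          (\<forall>w w'. x<w \<longrightarrow> w<y \<longrightarrow> x<w' \<longrightarrow> w'<y \<longrightarrow> w\<in>S \<longrightarrow> w'\<in>S \<longrightarrow> w=w')"
          using less.hyps[OF lt] cb' c(2) less.prems(3) \<open>odd (b - c)\<close> True by blast
        then obtain x y where H: "c \<le> x \<and> x < y \<and> y \<le> b \<and> x \<in> S \<and> y \<in> S \<and> odd (y - x) \<and> 3 \<le> y - x \<and>
          (\<forall>w w'. x<w \<longrightarrow> w<y \<longrightarrow> x<w' \<longrightarrow> w'<y \<longrightarrow> w\<in>S \<longrightarrow> w'\<in>S \<longrightarrow> w=w')" by blast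
        have "a \<le> x" using H wa c(1) by arith
        then show ?thesis using H by blast
      next
        case False
        have c1: "c+1 \<in> S" using False cb' less.prems(3) by (cases "c+1 = b") auto
        have "\<forall>w. a<w \<longrightarrow> w<c+1 \<longrightarrow> w\<in>S \<longrightarrow> w = c"
        proof (intro allI impI)
          fix w assume "a<w" "w<c+1" "w\<in>S"
          have "w \<noteq> w0" using w0 \<open>w\<in>S\<close> by blast
          then have "w0 < w" using wa \<open>a<w\<close> by arith
          then have "\<not> w < c" using cmin[of w] \<open>w\<in>S\<close> by blast
          then show "w = c" using \<open>w<c+1\<close> by arith
        qed
        note uni = this
        have "odd (c + 1 - a)" "3 \<le> c + 1 - a" using ev wa c by presburger+
        moreover have "\<forall>w w'. a<w \<longrightarrow> w<c+1 \<longrightarrow> a<w' \<longrightarrow> w'<c+1 \<longrightarrow> w\<in>S \<longrightarrow> w'\<in>S \<longrightarrow> w=w'"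
          using uni by metis
        moreover have "a < c+1" "c+1 \<le> b" using wa c cb' by auto
        ultimately show ?thesis using c1 less.prems(2) by blast
      qed
    qed
  qed
qed

lemma mono_add:
  assumes "\<And>i j. i<j \<Longrightarrow> j<n \<Longrightarrow> f i < (f j::nat)"
  shows "a \<le> b \<Longrightarrow> b < n \<Longrightarrow> f a + (b - a) \<le> f b"
proof (induction b)
  case 0 then show ?case by simp
next
  case (Suc b)
  show ?case
  proof (cases "a = Suc b")
    case True then show ?thesis by simp
  next
    case False
    then have "a \<le> b" using Suc.prems by simp
    then have "f a + (b - a) \<le> f b" using Suc by simp
    moreover have "f b < f (Suc b)" using assms Suc.prems by simp
    ultimately show ?thesis using \<open>a \<le> b\<close> by simp
  qed
qed

lemma gen:
  assumes G: "graph V E" and PP: "is_path V E P" and zV: "z \<in> V" and zP: "z \<notin> set P"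
  and mono: "\<And>i j. i<j \<Longrightarrow> j<n \<Longrightarrow> f i < f j"
  and bound: "f (n-1) < length P" and n4: "4 \<le> n" and ev: "even n"
  and step: "\<And>k. k+1<n \<Longrightarrow> E (P!f k) (P!f (Suc k))"
  and e0: "E z (P!f 0)" and e1: "E z (P!f (n-1))"
  and chP: "\<And>i j. (i,j)\<in>path_chords E P \<Longrightarrow> j = i+2"
  and chc: "card (path_chords E P) \<le> 1"
  and H: "(\<forall>k. 0<k \<longrightarrow> k<n-1 \<longrightarrow> \<not>E z (P!f k)) \<or>
     ((\<forall>k. k+2<n \<longrightarrow> \<not>E (P!f k) (P!f (k+2))) \<and>
      (\<forall>k k'. 0<k \<longrightarrow> k<n-1 \<longrightarrow> 0<k' \<longrightarrow> k'<n-1 \<longrightarrow> E z (P!f k) \<longrightarrow> E z (P!f k') \<longrightarrow> k=k'))"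
  shows "\<exists>C. set C \<subseteq> set P \<union> {z} \<and> meyniel_obstruction V E C"
proof -
  have sym: "\<And>x y. E x y \<Longrightarrow> E y x" using G unfolding graph_def by blast
  have distP: "distinct P" and PV: "set P \<subseteq> V" using PP unfolding is_path_def by auto
  define C where "C = z # map (\<lambda>k. P!f k) [0..<n]"
  have fl: "f k < length P" if "k<n" for k
  proof (cases "k = n-1")
    case True then show ?thesis using bound by simp
  next
    case False
    then have "k < n-1" using that by arith
    then have "f k < f (n-1)" using mono[of k "n-1"] that by simp
    then show ?thesis using bound by simp
  qed
  have len: "length C = n+1" unfolding C_def by simp
  have C0: "C!0 = z" unfolding C_def by simp
  have CS: "C!(Suc k) = P!f k" if "k<n" for k using that unfolding C_def by simp
  have setC: "set C \<subseteq> set P \<union> {z}" unfolding C_def using fl by auto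
  have finj: "i = j" if "i<n" "j<n" "f i = f j" for i j
    using mono[of i j] mono[of j i] that by (cases i j rule: linorder_cases) auto
  have inj: "i = j" if "i<n" "j<n" "P!f i = P!f j" for i j
    using that fl[of i] fl[of j] distP finj nth_eq_iff_index_eq by metis
  have dist: "distinct C"
    unfolding C_def using zP fl inj by (auto simp: distinct_map inj_on_def)
  have cyc: "is_cycle V E C"
    unfolding is_cycle_def
  proof (intro conjI allI impI)
    show "3 \<le> length C" using len n4 by simp
    show "distinct C" by (rule dist)
    show "set C \<subseteq> V" using setC PV zV by auto
    fix i assume i: "i < length C"
    show "E (C ! i) (C ! ((i + 1) mod length C))"
    proof (cases i)
      case 0 then show ?thesis using len n4 C0 CS[of 0] e0 by simp
    next
      case (Suc k)
      show ?thesis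
      proof (cases "k = n-1")
        case True
        then have "(i+1) mod length C = 0" using len Suc n4 by simp
        then show ?thesis using True Suc CS[of k] C0 e1 sym n4 by simp
      next
        case False
        then have "(i+1) mod length C = Suc (Suc k)" using len Suc i by simp
        then show ?thesis using False Suc CS[of k] CS[of "Suc k"] step[of k] i len by simp
      qed
    qed
  qed
  have form: "(\<exists>k. c = (0,Suc k) \<and> 0<k \<and> k<n-1 \<and> E z (P!f k)) \<or>
     (\<exists>k. c = (Suc k, k+3) \<and> k+2<n \<and> E (P!f k) (P!f (k+2)))"
    if cc: "c \<in> cycle_chords E C" for c
  proof -
    obtain i j where c: "c = (i,j)" "i+1<j" "j<n+1" "\<not>(i=0 \<and> j=n)" "E (C!i) (C!j)"
      using cc len unfolding cycle_chords_def by auto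
    obtain b where b: "j = Suc b" using c by (cases j) auto
    show ?thesis
    proof (cases i)
      case 0
      then have "E z (P!f b)" using c b C0 CS[of b] by simp
      then show ?thesis using c b 0 by auto
    next
      case (Suc a)
      have ab: "a+2 \<le> b" "b < n" using c b Suc by auto
      have E1: "E (P!f a) (P!f b)" using c b Suc CS[of a] CS[of b] ab by simp
      have "f a + (b - a) \<le> f b" using mono_add[OF mono, where a=a and b=b] ab by simp
      then have "(f a, f b) \<in> path_chords E P" unfolding path_chords_def using E1 fl[of b] ab by auto
      then have "f b = f a + 2" using chP by blast
      then have "b = a+2" using \<open>f a + (b - a) \<le> f b\<close> ab by simp
      then show ?thesis using c b Suc E1 ab by auto
    qed
  qed
  have finch: "finite (path_chords E P)"
    by (rule finite_subset[of _ "{..<length P} \<times> {..<length P}"]) (auto simp: path_chords_def)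
  have chu: "\<forall>a1\<in>path_chords E P. \<forall>a2\<in>path_chords E P. a1 = a2"
    using chc card_le_Suc0_iff_eq[OF finch] by simp
  have uniq: "c1 = c2" if u1: "c1 \<in> cycle_chords E C" and u2: "c2 \<in> cycle_chords E C" for c1 c2
  proof -
    have pc: "(f k, f (k+2)) \<in> path_chords E P" if "k+2<n" "E (P!f k) (P!f (k+2))" for k
    proof -
      have "f k + ((k+2) - k) \<le> f (k+2)" using mono_add[OF mono, where a=k and b="k+2"] that by simp
      with that fl[of "k+2"] show ?thesis unfolding path_chords_def by auto
    qed
    have pu: "k = k'" if "k+2<n" "E (P!f k) (P!f (k+2))" "k'+2<n" "E (P!f k') (P!f (k'+2))" for k k'
    proof -
      have "(f k, f (k+2)) = (f k', f (k'+2))"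
        using bspec[OF bspec[OF chu pc[OF that(1,2)]] pc[OF that(3,4)]] .
      then have "f k = f k'" by simp
      then show ?thesis using finj[of k k'] that by simp
    qed
    from H show ?thesis
    proof
      assume H1: "\<forall>k. 0<k \<longrightarrow> k<n-1 \<longrightarrow> \<not>E z (P!f k)"
      have X: "\<exists>k. c = (Suc k, k+3) \<and> k+2<n \<and> E (P!f k) (P!f (k+2))" if "c \<in> cycle_chords E C" for c
        using form[OF that] H1 by auto
      obtain k where "c1 = (Suc k, k+3)" "k+2<n" "E (P!f k) (P!f (k+2))" using X[OF u1] by blast
      moreover obtain k' where "c2 = (Suc k', k'+3)" "k'+2<n" "E (P!f k') (P!f (k'+2))" using X[OF u2] by blast
      ultimately show ?thesis using pu by blast
    next
      assume H2: "(\<forall>k. k+2<n \<longrightarrow> \<not>E (P!f k) (P!f (k+2))) \<and>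
        (\<forall>k k'. 0<k \<longrightarrow> k<n-1 \<longrightarrow> 0<k' \<longrightarrow> k'<n-1 \<longrightarrow> E z (P!f k) \<longrightarrow> E z (P!f k') \<longrightarrow> k=k')"
      have X: "\<exists>k. c = (0,Suc k) \<and> 0<k \<and> k<n-1 \<and> E z (P!f k)" if "c \<in> cycle_chords E C" for c
        using form[OF that] H2 by auto
      obtain k where "c1 = (0, Suc k)" "0<k" "k<n-1" "E z (P!f k)" using X[OF u1] by blast
      moreover obtain k' where "c2 = (0, Suc k')" "0<k'" "k'<n-1" "E z (P!f k')" using X[OF u2] by blast
      ultimately show ?thesis using H2 by blast
    qed
  qed
  have fincc: "finite (cycle_chords E C)"
    by (rule finite_subset[of _ "{..<length C} \<times> {..<length C}"]) (auto simp: cycle_chords_def)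
  have "card (cycle_chords E C) \<le> 1"
    using uniq card_le_Suc0_iff_eq[OF fincc] by simp
  then have "meyniel_obstruction V E C"
    unfolding meyniel_obstruction_def using cyc len ev n4 by simp
  then show ?thesis using setC by blast
qed

theorem lemma2:
  fixes V :: "'a set" and E :: "'a \<Rightarrow> 'a \<Rightarrow> bool" and P :: "'a list" and z :: 'a
  assumes "graph V E"
    and "near_obstruction V E P z"
  shows "\<exists>C. set C \<subseteq> set P \<union> {z} \<and> meyniel_obstruction V E C"
proof -
  define p where "p = length P - 1"
  define ch where "ch = path_chords E P"
  have PP: "is_path V E P" and p3: "3 \<le> p" and oddp: "odd p" and chc: "card ch \<le> 1"
    and chf: "\<forall>(i,j)\<in>ch. j = i+2 \<and> 0 < i+1 \<and> i+1 < p-1"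
    and zV: "z \<in> V" and zP: "z \<notin> set P" and z0: "E z (P!0)" and zp: "E z (P!p)"
    and types: "(ch = {(0,2)} \<and> \<not>E z (P!1) \<and> \<not>E z (P!2)) \<or> (ch = {(1,3)} \<and> (\<not>E z (P!1) \<or> \<not>E z (P!3)))
      \<or> ((0,2)\<notin>ch \<and> \<not>E z (P!1)) \<or> ((0,2)\<notin>ch \<and> (1,3)\<notin>ch \<and> E z (P!1) \<and> \<not>E z (P!2))"
    using assms(2) unfolding near_obstruction_def Let_def p_def[symmetric] ch_def[symmetric] by auto
  have lenP: "length P = p+1" using p3 p_def by simp
  have adj: "E (P!j) (P!Suc j)" if "j < p" for j using PP that lenP unfolding is_path_def by auto
  have chP: "j = i+2 \<and> i+2 < p" if "(i,j)\<in>ch" for i j using chf that by auto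
  have chE: "E (P!i) (P!j)" if "(i,j)\<in>ch" for i j using that unfolding ch_def path_chords_def by auto
  have chIn: "(i,j)\<in>ch" if "i+2 \<le> j" "j \<le> p" "E (P!i) (P!j)" for i j
    using that lenP unfolding ch_def path_chords_def by auto
  have finch: "finite ch"
    unfolding ch_def by (rule finite_subset[of _ "{..<length P} \<times> {..<length P}"]) (auto simp: path_chords_def)
  have chu: "\<forall>a1\<in>ch. \<forall>a2\<in>ch. a1 = a2" using chc card_le_Suc0_iff_eq[OF finch] by simp
  define S where "S = {i. i \<le> p \<and> E z (P!i)}"
  have S0: "0 \<in> S" and Sp: "p \<in> S" using z0 zp unfolding S_def by auto
  have genA: "\<exists>C. set C \<subseteq> set P \<union> {z} \<and> meyniel_obstruction V E C" if
    "x<y" "y \<le> p" "x\<in>S" "y\<in>S" "odd (y-x)" "3 \<le> y-x"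
    "(\<forall>w. x<w \<longrightarrow> w<y \<longrightarrow> w\<notin>S) \<or> ((\<forall>w w'. x<w \<longrightarrow> w<y \<longrightarrow> x<w' \<longrightarrow> w'<y \<longrightarrow> w\<in>S \<longrightarrow> w'\<in>S \<longrightarrow> w=w') \<and>
      (\<forall>i. (i,i+2)\<in>ch \<longrightarrow> \<not>(x \<le> i \<and> i+2 \<le> y)))" for x y
  proof (rule gen[OF assms(1) PP zV zP, where f="\<lambda>k. x+k" and n="y-x+1"])
    show "\<And>i j. i < j \<Longrightarrow> j < y - x + 1 \<Longrightarrow> x + i < x + j" by simp
    show "x + (y - x + 1 - 1) < length P" using that lenP by simp
    show "4 \<le> y - x + 1" using that by simp
    show "even (y - x + 1)" using that by simp
    show "E (P ! (x + k)) (P ! (x + Suc k))" if "k + 1 < y - x + 1" for k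
      using adj[of "x+k"] that \<open>x<y\<close> \<open>y \<le> p\<close> by simp
    show "E z (P ! (x + 0))" using that unfolding S_def by simp
    show "E z (P ! (x + (y - x + 1 - 1)))" using that unfolding S_def by simp
    show "\<And>i j. (i, j) \<in> path_chords E P \<Longrightarrow> j = i + 2" using chP ch_def by blast
    show "card (path_chords E P) \<le> 1" using chc ch_def by simp
    show "(\<forall>k. 0 < k \<longrightarrow> k < y - x + 1 - 1 \<longrightarrow> \<not> E z (P ! (x + k))) \<or>
      (\<forall>k. k + 2 < y - x + 1 \<longrightarrow> \<not> E (P ! (x + k)) (P ! (x + (k + 2)))) \<and>
      (\<forall>k k'. 0 < k \<longrightarrow> k < y - x + 1 - 1 \<longrightarrow> 0 < k' \<longrightarrow> k' < y - x + 1 - 1 \<longrightarrow>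
          E z (P ! (x + k)) \<longrightarrow> E z (P ! (x + k')) \<longrightarrow> k = k')"
    proof (cases "\<forall>w. x<w \<longrightarrow> w<y \<longrightarrow> w\<notin>S")
      case True
      then show ?thesis using \<open>y \<le> p\<close> unfolding S_def by auto
    next
      case False
      then have U: "\<forall>w w'. x<w \<longrightarrow> w<y \<longrightarrow> x<w' \<longrightarrow> w'<y \<longrightarrow> w\<in>S \<longrightarrow> w'\<in>S \<longrightarrow> w=w'"
        and NC: "\<forall>i. (i,i+2)\<in>ch \<longrightarrow> \<not>(x \<le> i \<and> i+2 \<le> y)" using that(7) by auto
      have "\<not> E (P ! (x + k)) (P ! (x + (k + 2)))" if "k + 2 < y - x + 1" for k
      proof
        assume "E (P ! (x + k)) (P ! (x + (k + 2)))"
        then have "(x+k, x+k+2) \<in> ch" using chIn[of "x+k" "x+k+2"] that \<open>y \<le> p\<close> by (simp add: add.assoc)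
        then show False using NC[rule_format, of "x+k"] that by simp
      qed
      moreover have "k = k'" if "0 < k" "k < y - x + 1 - 1" "0 < k'" "k' < y - x + 1 - 1"
          "E z (P ! (x + k))" "E z (P ! (x + k'))" for k k'
        using U[rule_format, of "x+k" "x+k'"] that \<open>y \<le> p\<close> unfolding S_def by auto
      ultimately show ?thesis by blast
    qed
  qed
  have genB: "\<exists>C. set C \<subseteq> set P \<union> {z} \<and> meyniel_obstruction V E C" if hB:
    "(s,s+2)\<in>ch" "x \<le> s" "s+2 \<le> y" "y \<le> p" "x\<in>S" "y\<in>S" "even (y-x)" "4 \<le> y-x"
    "\<forall>w w'. x<w \<longrightarrow> w<y \<longrightarrow> w\<noteq>s+1 \<longrightarrow> x<w' \<longrightarrow> w'<y \<longrightarrow> w'\<noteq>s+1 \<longrightarrow> w\<in>S \<longrightarrow> w'\<in>S \<longrightarrow> w=w'" for s x y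
  proof -
    define f where "f = (\<lambda>k. if x+k \<le> s then x+k else x+k+1)"
    have fmono: "f i < f j" if "i<j" for i j using that unfolding f_def by auto
    have fge: "f k + 2 \<le> f (k+2)" for k unfolding f_def by auto
    have fgt: "x + k \<le> f k" "f k \<le> x+k+1" for k unfolding f_def by auto
    have fne: "f k \<noteq> s+1" for k unfolding f_def by auto
    have fn: "f (y-x-1) = y" unfolding f_def using that by auto
    have chs: "(i,j) = (s,s+2)" if "(i,j)\<in>ch" for i j using chu that \<open>(s,s+2)\<in>ch\<close> by blast
    show ?thesis
    proof (rule gen[OF assms(1) PP zV zP, where f=f and n="y-x"])
      show "\<And>i j. i < j \<Longrightarrow> j < y - x \<Longrightarrow> f i < f j" using fmono by blast
      show "f (y - x - 1) < length P" using fn that lenP by simp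
      show "4 \<le> y - x" "even (y - x)" using that by auto
      show "E (P ! f k) (P ! f (Suc k))" if "k + 1 < y - x" for k
      proof (cases "x + k = s")
        case True
        then have "f k = s" "f (Suc k) = s+2" unfolding f_def by auto
        then show ?thesis using chE \<open>(s,s+2)\<in>ch\<close> by simp
      next
        case False
        then have "f (Suc k) = Suc (f k)" unfolding f_def by auto
        moreover have "f k < p" using fgt[of k] that \<open>y \<le> p\<close> False \<open>s+2 \<le> y\<close> unfolding f_def by auto
        ultimately show ?thesis using adj by simp
      qed
      show "E z (P ! f 0)" using that unfolding S_def f_def by simp
      show "E z (P ! f (y - x - 1))" using fn that unfolding S_def by simp
      show "\<And>i j. (i, j) \<in> path_chords E P \<Longrightarrow> j = i + 2" using chP ch_def by blast
      show "card (path_chords E P) \<le> 1" using chc ch_def by simp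
      have "\<not> E (P ! f k) (P ! f (k + 2))" if "k + 2 < y - x" for k
      proof
        assume A: "E (P ! f k) (P ! f (k + 2))"
        have "f (k+2) \<le> x + (k+2) + 1" using fgt by blast
        moreover have "x + (k+2) + 1 \<le> y" using that by simp
        ultimately have "f (k+2) \<le> p" using \<open>y \<le> p\<close> by simp
        then have "(f k, f (k+2)) \<in> ch" using chIn[OF fge[of k]] A by simp
        then have "f k = s" "f (k+2) = s+2" using chs by auto
        then show False unfolding f_def by (auto split: if_splits)
      qed
      moreover have "k = k'" if "0 < k" "k < y - x - 1" "0 < k'" "k' < y - x - 1"
          "E z (P ! f k)" "E z (P ! f k')" for k k'
      proof -
        have "f k < f (y-x-1)" "f k' < f (y-x-1)" using fmono that by auto
        moreover have "f 0 < f k" "f 0 < f k'" using fmono that by auto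
        moreover have "f 0 = x" unfolding f_def using hB by simp
        ultimately have "f k = f k'"
          using hB(9)[rule_format, of "f k" "f k'"] fne fn \<open>y \<le> p\<close> that(5,6) unfolding S_def by auto
        then show ?thesis using fmono by (metis less_irrefl linorder_neqE_nat)
      qed
      ultimately show "(\<forall>k. 0 < k \<longrightarrow> k < y - x - 1 \<longrightarrow> \<not> E z (P ! f k)) \<or>
        (\<forall>k. k + 2 < y - x \<longrightarrow> \<not> E (P ! f k) (P ! f (k + 2))) \<and>
        (\<forall>k k'. 0 < k \<longrightarrow> k < y - x - 1 \<longrightarrow> 0 < k' \<longrightarrow> k' < y - x - 1 \<longrightarrow>
          E z (P ! f k) \<longrightarrow> E z (P ! f k') \<longrightarrow> k = k')" by blast
    qed
  qed
  have chcase: "ch = {} \<or> (\<exists>s. ch = {(s,s+2)} \<and> s+2 < p)"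
  proof (cases "ch = {}")
    case False
    then obtain i j where ij: "(i,j) \<in> ch" by auto
    then have "j = i+2" "i+2 < p" using chP by auto
    moreover have "ch = {(i,j)}" using ij chu by blast
    ultimately show ?thesis by blast
  qed simp
  have Sin: "k \<in> S \<longleftrightarrow> E z (P!k)" if "k \<le> p" for k using that unfolding S_def by simp
  have S123: "1 \<in> S \<longleftrightarrow> E z (P!1)" "2 \<in> S \<longleftrightarrow> E z (P!2)" "3 \<in> S \<longleftrightarrow> E z (P!3)"
    using Sin p3 by auto
  from chcase show ?thesis
  proof
    assume ch0: "ch = {}"
    then have "1 \<notin> S \<or> 2 \<notin> S" using types S123 by auto
    moreover have "(0::nat) < 1" "(1::nat) < p" "(0::nat) < 2" "(2::nat) < p" using p3 by auto
    ultimately have ex: "\<exists>w. 0<w \<and> w<p \<and> w\<notin>S" by blast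
    obtain x y where xy: "0 \<le> x \<and> x < y \<and> y \<le> p \<and> x \<in> S \<and> y \<in> S \<and> odd (y - x) \<and> 3 \<le> y - x \<and>
      (\<forall>w w'. x<w \<longrightarrow> w<y \<longrightarrow> x<w' \<longrightarrow> w'<y \<longrightarrow> w\<in>S \<longrightarrow> w'\<in>S \<longrightarrow> w=w')"
      using comb[of 0 p S, OF _ S0 Sp _ ex] p3 oddp by auto
    show ?thesis using genA[of x y] xy ch0 by blast
  next
    assume "\<exists>s. ch = {(s,s+2)} \<and> s+2 < p"
    then obtain s where chs: "ch = {(s,s+2)}" and sp: "s+2 < p" by blast
    have sch: "(s,s+2) \<in> ch" using chs by simp
    have chiff: "(i,i+2)\<in>ch \<longleftrightarrow> i = s" for i using chs by auto
    have T: "(s = 0 \<and> 1\<notin>S \<and> 2\<notin>S) \<or> (s=1 \<and> (1\<notin>S \<or> 3\<notin>S)) \<or> (s\<noteq>0 \<and> 1\<notin>S) \<or> (s \<noteq> 0 \<and> s \<noteq> 1 \<and> 1 \<in> S \<and> 2\<notin>S)"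
      using types S123 unfolding chs by auto
    show ?thesis
    proof (cases "s+1 \<in> S")
      case True
      show ?thesis
      proof (cases "even s")
        case True
        have ex: "\<exists>w. 0<w \<and> w<s+1 \<and> w\<notin>S"
        proof -
          have "s \<noteq> 1" using True by auto
          then have "(s \<noteq> 0 \<and> 1\<notin>S) \<or> (s \<noteq> 0 \<and> 2\<notin>S)" using T \<open>s+1 \<in> S\<close> by auto
          moreover have "s \<noteq> 0 \<Longrightarrow> 2 \<le> s" using True by presburger
          moreover have "(0::nat) < 1" "(0::nat) < 2" by auto
          moreover have "s \<noteq> 0 \<Longrightarrow> 1 < s+1 \<and> 2 < s+1" using True by presburger
          ultimately show ?thesis by blast
        qed
        obtain x y where xy: "0 \<le> x \<and> x < y \<and> y \<le> s+1 \<and> x \<in> S \<and> y \<in> S \<and> odd (y - x) \<and> 3 \<le> y - x \<and>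
          (\<forall>w w'. x<w \<longrightarrow> w<y \<longrightarrow> x<w' \<longrightarrow> w'<y \<longrightarrow> w\<in>S \<longrightarrow> w'\<in>S \<longrightarrow> w=w')"
          using comb[of 0 "s+1" S, OF _ S0 \<open>s+1 \<in> S\<close> _ ex] True by auto
        show ?thesis using genA[of x y] xy chiff sp by auto
      next
        case False
        show ?thesis
        proof (cases "\<exists>w. s+1<w \<and> w<p \<and> w\<notin>S")
          case True
          obtain x y where xy: "s+1 \<le> x \<and> x < y \<and> y \<le> p \<and> x \<in> S \<and> y \<in> S \<and> odd (y - x) \<and> 3 \<le> y - x \<and>
            (\<forall>w w'. x<w \<longrightarrow> w<y \<longrightarrow> x<w' \<longrightarrow> w'<y \<longrightarrow> w\<in>S \<longrightarrow> w'\<in>S \<longrightarrow> w=w')"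
            using comb[of "s+1" p S, OF _ \<open>s+1 \<in> S\<close> Sp _ True] False oddp sp by auto
          show ?thesis using genA[of x y] xy chiff sp by auto
        next
          case False
          then have s2: "s+2 \<in> S" using sp by auto
          have s3: "s+3 \<in> S" using False sp Sp by (cases "s+3 = p") auto
          have ex: "\<exists>w. 0<w \<and> w<s+2 \<and> w\<notin>S"
          proof -
            have "s = 1 \<Longrightarrow> 3 \<in> S" using s2 by (simp add: numeral_3_eq_3)
            then have "1 \<notin> S \<or> (s \<noteq> 1 \<and> 2 \<notin> S)" using T \<open>odd s\<close> by auto
            moreover have "s \<noteq> 1 \<Longrightarrow> 3 \<le> s" using \<open>odd s\<close> by presburger
            moreover have "(0::nat) < 1" "(0::nat) < 2" "(1::nat) < s+2" by auto
            moreover have "s \<noteq> 1 \<Longrightarrow> 2 < s+2" using \<open>odd s\<close> by presburger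
            ultimately show ?thesis by blast
          qed
          obtain x y where xy: "0 \<le> x \<and> x < y \<and> y \<le> s+2 \<and> x \<in> S \<and> y \<in> S \<and> odd (y - x) \<and> 3 \<le> y - x \<and>
            (\<forall>w w'. x<w \<longrightarrow> w<y \<longrightarrow> x<w' \<longrightarrow> w'<y \<longrightarrow> w\<in>S \<longrightarrow> w'\<in>S \<longrightarrow> w=w')"
            using comb[of 0 "s+2" S, OF _ S0 s2 _ ex] \<open>odd s\<close> by auto
          show ?thesis
          proof (cases "x \<le> s \<and> s+2 \<le> y")
            case False
            then show ?thesis using genA[of x y] xy chiff sp by auto
          next
            case True
            then have y2: "y = s+2" using xy by auto
            have U: "w = s+2" if "x<w" "w<s+3" "w\<noteq>s+1" "w\<in>S" for w
            proof (rule ccontr)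
              assume "w \<noteq> s+2"
              then have "w < y" using that y2 by auto
              then show False using xy that \<open>s+1 \<in> S\<close> True y2 by fastforce
            qed
            have o1: "odd (y-x)" "3 \<le> y-x" "x \<le> s" using xy True by auto
            have e1: "even (s+3-x)" "4 \<le> s+3-x" using o1 y2 by (presburger, linarith)
            have u1: "\<forall>w w'. x<w \<longrightarrow> w<s+3 \<longrightarrow> w\<noteq>s+1 \<longrightarrow> x<w' \<longrightarrow> w'<s+3 \<longrightarrow> w'\<noteq>s+1 \<longrightarrow> w\<in>S \<longrightarrow> w'\<in>S \<longrightarrow> w=w'"
            proof (intro allI impI)
              fix w w' assume "x<w" "w<s+3" "w\<noteq>s+1" "x<w'" "w'<s+3" "w'\<noteq>s+1" "w\<in>S" "w'\<in>S"
              then show "w = w'" using U[of w] U[of w'] by simp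
            qed
            have "s+3 \<le> p" using sp by simp
            show ?thesis by (rule genB[OF sch _ _ \<open>s+3 \<le> p\<close> _ s3 e1 u1]) (use True xy in auto)
          qed
        qed
      qed
    next
      case False
      note ns1 = False
      define x0 where "x0 = Max {i. i \<le> s \<and> i\<in>S}"
      define y0 where "y0 = Min {i. s+2 \<le> i \<and> i \<le> p \<and> i\<in>S}"
      have fx: "finite {i. i \<le> s \<and> i\<in>S}" by simp
      have fy: "finite {i. s+2 \<le> i \<and> i \<le> p \<and> i\<in>S}" by simp
      have nx: "{i. i \<le> s \<and> i\<in>S} \<noteq> {}" using S0 by auto
      have ny: "{i. s+2 \<le> i \<and> i \<le> p \<and> i\<in>S} \<noteq> {}" using Sp sp by auto
      have x0: "x0 \<le> s" "x0 \<in> S" using Max_in[OF fx nx] unfolding x0_def by auto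
      have x0m: "w \<notin> S" if "x0 < w" "w \<le> s" for w
      proof
        assume "w \<in> S"
        then have "w \<le> x0" using Max_ge[OF fx, of w] that unfolding x0_def by auto
        then show False using that by simp
      qed
      have y0: "s+2 \<le> y0" "y0 \<le> p" "y0 \<in> S" using Min_in[OF fy ny] unfolding y0_def by auto
      have y0m: "w \<notin> S" if "w < y0" "s+2 \<le> w" for w
      proof
        assume "w \<in> S"
        then have "y0 \<le> w" using Min_le[OF fy, of w] that y0 unfolding y0_def by auto
        then show False using that by simp
      qed
      have gap: "w \<notin> S" if "x0 < w" "w < y0" for w
      proof (cases "w \<le> s")
        case True then show ?thesis using x0m that by blast
      next
        case False
        then have "w = s+1 \<or> s+2 \<le> w" by arith
        then show ?thesis using y0m ns1 that by blast
      qed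
      show ?thesis
      proof (cases "odd (y0 - x0)")
        case True
        have "3 \<le> y0 - x0" using True x0(1) y0(1) by presburger
        then show ?thesis using genA[of x0 y0] True x0 y0 gap by auto
      next
        case False
        show ?thesis
        proof (cases "4 \<le> y0 - x0")
          case True
          have u1: "\<forall>w w'. x0<w \<longrightarrow> w<y0 \<longrightarrow> w\<noteq>s+1 \<longrightarrow> x0<w' \<longrightarrow> w'<y0 \<longrightarrow> w'\<noteq>s+1 \<longrightarrow> w\<in>S \<longrightarrow> w'\<in>S \<longrightarrow> w=w'"
            using gap by blast
          have "even (y0 - x0)" using False by simp
          show ?thesis by (rule genB[OF sch x0(1) y0(1) y0(2) x0(2) y0(3) \<open>even (y0 - x0)\<close> True u1])
        next
          case False
          then have xs: "x0 = s" and ys: "y0 = s+2" using \<open>\<not> odd (y0 - x0)\<close> x0(1) y0(1) by presburger+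
          define S2 where "S2 = insert (s+1) S"
          have ex: "\<exists>w. 0<w \<and> w<p \<and> w\<notin>S2"
          proof -
            have "(1 \<notin> S \<and> s \<noteq> 0) \<or> (2 \<notin> S \<and> s \<noteq> 1) \<or> (3 \<notin> S \<and> s = 1)" using T by auto
            moreover have "(0::nat) < 1" "(0::nat) < 2" "(0::nat) < 3" "(1::nat) < p" "(2::nat) < p" by (use p3 in auto)
            moreover have "s = 1 \<Longrightarrow> 3 < p" using sp by auto
            moreover have "s \<noteq> 0 \<Longrightarrow> 1 \<noteq> s+1" "s \<noteq> 1 \<Longrightarrow> 2 \<noteq> s+1" "s = 1 \<Longrightarrow> 3 \<noteq> s+1" by auto
            ultimately show ?thesis unfolding S2_def by blast
          qed
          obtain x y where xy: "0 \<le> x \<and> x < y \<and> y \<le> p \<and> x \<in> S2 \<and> y \<in> S2 \<and> odd (y - x) \<and> 3 \<le> y - x \<and>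
            (\<forall>w w'. x<w \<longrightarrow> w<y \<longrightarrow> x<w' \<longrightarrow> w'<y \<longrightarrow> w\<in>S2 \<longrightarrow> w'\<in>S2 \<longrightarrow> w=w')"
            using comb[of 0 p S2, OF _ _ _ _ ex] S0 Sp p3 oddp unfolding S2_def by auto
          consider (a) "x \<noteq> s+1" "y \<noteq> s+1" | (b) "x = s+1" | (c) "y = s+1" by blast
          then show ?thesis
          proof cases
            case a
            then have xyS: "x \<in> S" "y \<in> S" using xy unfolding S2_def by auto
            show ?thesis
            proof (cases "x \<le> s \<and> s+2 \<le> y")
              case True
              have "\<forall>w. x<w \<longrightarrow> w<y \<longrightarrow> w\<notin>S"
              proof (intro allI impI)
                fix w assume "x<w" "w<y"
                show "w \<notin> S"
                proof
                  assume "w \<in> S"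
                  then have "w = s+1" using xy \<open>x<w\<close> \<open>w<y\<close> True unfolding S2_def
                  proof -
                    have "s+1 \<in> S2" "w \<in> S2" using \<open>w \<in> S\<close> unfolding S2_def by auto
                    moreover have "x < s+1" "s+1 < y" using True by auto
                    ultimately show ?thesis using xy \<open>x<w\<close> \<open>w<y\<close> by blast
                  qed
                  then show False using ns1 \<open>w \<in> S\<close> by simp
                qed
              qed
              then show ?thesis using genA[of x y] xy xyS by auto
            next
              case False
              have "\<forall>w w'. x<w \<longrightarrow> w<y \<longrightarrow> x<w' \<longrightarrow> w'<y \<longrightarrow> w\<in>S \<longrightarrow> w'\<in>S \<longrightarrow> w=w'"
                using xy unfolding S2_def by auto
              then show ?thesis using genA[of x y] xy xyS False chiff by auto
            qed
          next
            case b
            then have yS: "y \<in> S" and y4: "s+4 \<le> y" using xy unfolding S2_def by auto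
            have o1: "odd (y-x)" using xy by auto
            have e1: "even (y-s)" "4 \<le> y-s" using o1 b y4 by (presburger, linarith)
            have u1: "\<forall>w w'. s<w \<longrightarrow> w<y \<longrightarrow> w\<noteq>s+1 \<longrightarrow> s<w' \<longrightarrow> w'<y \<longrightarrow> w'\<noteq>s+1 \<longrightarrow> w\<in>S \<longrightarrow> w'\<in>S \<longrightarrow> w=w'"
            proof (intro allI impI)
              fix w w' assume "s<w" "w<y" "w\<noteq>s+1" "s<w'" "w'<y" "w'\<noteq>s+1" "w\<in>S" "w'\<in>S"
              then have "x<w" "x<w'" "w\<in>S2" "w'\<in>S2" using b unfolding S2_def by auto
              then show "w = w'" using xy \<open>w<y\<close> \<open>w'<y\<close> by blast
            qed
            have "s \<in> S" using x0 xs by simp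
            show ?thesis by (rule genB[OF sch _ _ _ \<open>s \<in> S\<close> yS e1 u1]) (use y4 xy in auto)
          next
            case c
            then have xS: "x \<in> S" and x4: "x+2 \<le> s" using xy unfolding S2_def by auto
            have o1: "odd (y-x)" "3 \<le> y-x" using xy by auto
            have e1: "even (s+2-x)" "4 \<le> s+2-x" using o1 c x4 by (presburger, linarith)
            have u1: "\<forall>w w'. x<w \<longrightarrow> w<s+2 \<longrightarrow> w\<noteq>s+1 \<longrightarrow> x<w' \<longrightarrow> w'<s+2 \<longrightarrow> w'\<noteq>s+1 \<longrightarrow> w\<in>S \<longrightarrow> w'\<in>S \<longrightarrow> w=w'"
            proof (intro allI impI)
              fix w w' assume "x<w" "w<s+2" "w\<noteq>s+1" "x<w'" "w'<s+2" "w'\<noteq>s+1" "w\<in>S" "w'\<in>S"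
              then have "w<y" "w'<y" "w\<in>S2" "w'\<in>S2" using c unfolding S2_def by auto
              then show "w = w'" using xy \<open>x<w\<close> \<open>x<w'\<close> by blast
            qed
            have "s+2 \<in> S" using y0 ys by simp
            show ?thesis by (rule genB[OF sch _ _ _ xS \<open>s+2 \<in> S\<close> e1 u1]) (use x4 sp in auto)
          qed
        qed
      qed
    qed
  qed
qed

end
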